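(* Let $p$ be an odd prime and $d\ge 3$ an integer with $p\nmid d$ and $d\not\equiv 1 \pmod p$. Let $f(x)=x^d+F(x)$ and $f'(x)=x^d+F'(x)$, where $F,F'\in\overline{\mathbb{F}}_p[x]$ are each either $0$ or of degree at most $d-2$, and no monomial appearing in $F$ or $F'$ has an exponent divisible by $p$ (in particular there is no constant term). Suppose $(M,\lambda,h)$ transforms $C_f$ into $C_{f'}$. Then, after normalizing $M$ so that $M(x)=\alpha x+\beta$ (which is possible since $M$ must fix $\infty$), one has $\beta=0$, $\lambda=\alpha^d$ (so $\alpha^{d(p-1)}=1$), and $h$ is a constant lying in $\mathbb{F}_p$. In other words, up to composition with an automorphism $(x,y)\mapsto(x,y+c)$, $c\in\mathbb{F}_p$, the isomorphism is $(x,y)\mapsto(\alpha x,\alpha^d y)$.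
   Context: Let $p$ be an odd prime. For $f\in\overline{\mathbb{F}}_p(x)$ not of the form $z^p-z$ with $z\in\overline{\mathbb{F}}_p(x)$, $C_f$ denotes the Artin–Schreier curve $y^p-y=f(x)$ over $\overline{\mathbb{F}}_p$. For a Möbius transformation $M(x)=\frac{\alpha x+\beta}{\gamma x+\delta}$ ($\alpha,\beta,\gamma,\delta\in\overline{\mathbb{F}}_p$, $\alpha\delta-\beta\gamma\neq0$), $\lambda\in\mathbb{F}_p^\times$ and $h\in\overline{\mathbb{F}}_p(x)$, we say that $(M,\lambda,h)$ transforms $C_f$ into $C_{f'}$ if $f(M(x))=\lambda f'(x)+h(x)^p-h(x)$; equivalently, substituting $x\mapsto M(x)$, $y\mapsto \lambda y+h(x)$ into the equation of $C_f$ yields the equation of $C_{f'}$. *)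

theory Defs
  imports "HOL-Computational_Algebra.Computational_Algebra"
begin

text \<open>Rational functions over a field k are modelled as the fraction field
  k poly fract.  A polynomial P embeds as Fract P 1.\<close>

definition rat_of_poly :: "'k::field poly \<Rightarrow> 'k poly fract" where
  "rat_of_poly P = Fract P 1"

text \<open>Substitution of the Moebius transformation M(x) = (a x + b)/(c x + e)
  into a polynomial P, giving the rational function P(M(x)):
  P(M(x)) = (sum_i P_i (a x + b)^i (c x + e)^(n - i)) / (c x + e)^n, n = deg P.\<close>

definition mobius_subst_poly ::
  "'k::field \<Rightarrow> 'k \<Rightarrow> 'k \<Rightarrow> 'k \<Rightarrow> 'k poly \<Rightarrow> 'k poly fract" where
  "mobius_subst_poly a b c e P =
     Fract (\<Sum>i\<le>degree P. smult (coeff P i) ([:b, a:] ^ i * [:e, c:] ^ (degree P - i)))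
           ([:e, c:] ^ degree P)"

text \<open>(M, lambda, h) transforms C_f into C_f' (f, f' polynomials, lambda in F_p^x given as an
  integer representative, h a rational function):
  f(M(x)) = lambda f'(x) + h^p - h.\<close>

definition transforms ::
  "nat \<Rightarrow> 'k::field \<Rightarrow> 'k \<Rightarrow> 'k \<Rightarrow> 'k \<Rightarrow> int \<Rightarrow> 'k poly fract \<Rightarrow> 'k poly \<Rightarrow> 'k poly \<Rightarrow> bool" where
  "transforms p a b c e lam h f f' \<longleftrightarrow>
     a * e - b * c \<noteq> 0 \<and> \<not> int p dvd lam \<and>
     mobius_subst_poly a b c e f = of_int lam * rat_of_poly f' + h ^ p - h"

definition algebraic_over_prime_field :: "'k::field \<Rightarrow> bool" where
  "algebraic_over_prime_field x \<longleftrightarrow>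
     (\<exists>P::'k poly. P \<noteq> 0 \<and> (\<forall>i. coeff P i \<in> range of_int) \<and> poly P x = 0)"

end

theory Submission imports Defs "HOL-Number_Theory.Cong" begin

lemma Fract_pow: "Fract (a::'a::idom) b ^ n = Fract (a^n) (b^n)"
  by (induction n) (simp_all add: One_fract_def)

lemma of_int_fract: "(of_int k :: 'a::idom fract) = Fract (of_int k) 1"
proof (cases k rule: int_cases)
  case (nonneg n) then show ?thesis by (simp add: of_nat_fract)
next
  case (neg n) then show ?thesis by (simp add: of_nat_fract del: of_nat_Suc)
qed

lemma coeff_lin_pow:
  fixes \<alpha> \<beta> :: "'a::comm_ring_1"
  shows "coeff ([:\<beta>,\<alpha>:]^n) n = \<alpha>^n \<and> coeff ([:\<beta>,\<alpha>:]^Suc n) n = of_nat (Suc n) * \<alpha>^n * \<beta>"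
proof (induction n)
  case 0 then show ?case by simp
next
  case (Suc n)
  have deg: "coeff ([:\<beta>,\<alpha>:]^k) j = 0" if "k < j" for k j
  proof (rule coeff_eq_0)
    have "degree ([:\<beta>,\<alpha>:]^k) \<le> degree [:\<beta>,\<alpha>:] * k" by (rule degree_power_le)
    also have "\<dots> \<le> k" by (simp add: degree_pCons_le)
    finally show "degree ([:\<beta>,\<alpha>:]^k) < j" using that by simp
  qed
  have m: "\<And>P. [:\<beta>,\<alpha>:] * P = smult \<beta> P + pCons 0 (smult \<alpha> P)" by simp
  have "coeff ([:\<beta>,\<alpha>:]^Suc n) (Suc n) = \<beta> * coeff ([:\<beta>,\<alpha>:]^n) (Suc n) + \<alpha> * coeff ([:\<beta>,\<alpha>:]^n) n"
    by (simp only: power_Suc m coeff_add coeff_smult coeff_pCons_Suc)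
  also have "\<dots> = \<alpha>^Suc n" using Suc deg[of n "Suc n"] by simp
  finally have 1: "coeff ([:\<beta>,\<alpha>:]^Suc n) (Suc n) = \<alpha>^Suc n" .
  have "coeff ([:\<beta>,\<alpha>:]^Suc (Suc n)) (Suc n) = \<beta> * coeff ([:\<beta>,\<alpha>:]^Suc n) (Suc n) + \<alpha> * coeff ([:\<beta>,\<alpha>:]^Suc n) n"
    by (simp only: power_Suc[of _ "Suc n"] m coeff_add coeff_smult coeff_pCons_Suc)
  also have "\<dots> = of_nat (Suc (Suc n)) * \<alpha>^Suc n * \<beta>"
    unfolding 1 conjunct2[OF Suc.IH] by (simp add: algebra_simps)
  finally show ?case using 1 by simp
qed

lemma order_pow: "p \<noteq> 0 \<Longrightarrow> order a (p ^ n) = n * order a p"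
  by (induction n) (simp_all add: order_mult order_0I)

lemma frob_plus1:
  fixes x :: "'k::comm_ring_1"
  assumes "prime CHAR('k)"
  shows "(x + 1) ^ CHAR('k) = x ^ CHAR('k) + 1"
proof -
  define p where "p = CHAR('k)"
  have p0: "p > 0" using assms prime_gt_0_nat p_def by blast
  have "(x + 1) ^ p = (\<Sum>k\<le>p. of_nat (p choose k) * x ^ k * 1 ^ (p - k))"
    by (rule binomial_ring)
  also have "\<dots> = (\<Sum>k\<in>{0,p}. of_nat (p choose k) * x ^ k * 1 ^ (p - k))"
  proof (rule sum.mono_neutral_right)
    show "\<forall>i\<in>{..p} - {0, p}. of_nat (p choose i) * x ^ i * 1 ^ (p - i) = 0"
    proof
      fix i assume i: "i \<in> {..p} - {0, p}"
      have "p dvd (p choose i)" using i p0 assms p_def by (intro dvd_choose_prime) auto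
      then have "(of_nat (p choose i) :: 'k) = 0" by (simp add: of_nat_eq_0_iff_char_dvd p_def)
      then show "of_nat (p choose i) * x ^ i * 1 ^ (p - i) = 0" by simp
    qed
  qed auto
  also have "\<dots> = x ^ p + 1" using p0 by simp
  finally show ?thesis by (simp add: p_def)
qed

lemma of_nat_frob:
  assumes "prime CHAR('k::comm_ring_1)"
  shows "(of_nat k :: 'k) ^ CHAR('k) = of_nat k"
proof (induction k)
  case 0 then show ?case using assms prime_gt_0_nat by (simp add: power_0_left)
next
  case (Suc k) then show ?case using frob_plus1[OF assms, of "of_nat k"] by (simp add: add.commute)
qed

lemma frob_fixed:
  fixes x :: "'k::field"
  assumes "prime CHAR('k)" "x ^ CHAR('k) = x"
  shows "\<exists>k::int. x = of_int k"
proof (rule ccontr)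
  assume nx: "\<not> ?thesis"
  define p where "p = CHAR('k)"
  have p2: "p \<ge> 2" using assms(1) prime_ge_2_nat p_def by blast
  define P :: "'k poly" where "P = monom 1 p + - [:0,1:]"
  have degP: "degree P = p" unfolding P_def using p2
    using degree_add_eq_left[of "- [:0,1:]" "monom (1::'k) p"] p2 by (simp add: degree_monom_eq del: add_uminus_conv_diff)
  hence P0: "P \<noteq> 0" using p2 by auto
  have S: "of_nat ` {0..<p} \<subseteq> {x. poly P x = 0}"
  proof
    fix y assume "y \<in> (of_nat ` {0..<p} :: 'k set)"
    then obtain k where "y = of_nat k" by auto
    moreover have "(of_nat k :: 'k) ^ p = of_nat k"
      using of_nat_frob assms(1) p_def by blast
    ultimately show "y \<in> {x. poly P x = 0}" by (simp add: P_def poly_monom)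
  qed
  have xin: "x \<in> {x. poly P x = 0}" using assms(2) by (simp add: P_def poly_monom p_def)
  have xnot: "x \<notin> of_nat ` {0..<p}"
    using nx by (metis image_iff of_int_of_nat_eq)
  have inj: "inj_on (of_nat :: nat \<Rightarrow> 'k) {0..<p}"
    by (auto simp: inj_on_def of_nat_eq_iff_cong_CHAR cong_def p_def)
  have "card (insert x (of_nat ` {0..<p} :: 'k set)) = Suc p"
    using xnot inj by (simp add: card_image)
  moreover have "card (insert x (of_nat ` {0..<p} :: 'k set)) \<le> card {x. poly P x = 0}"
    using S xin poly_roots_finite[OF P0] by (intro card_mono) auto
  moreover have "card {x. poly P x = 0} \<le> p" using card_poly_roots_bound[OF P0] degP by simp
  ultimately show False by simp
qed


lemma smult_sum_right: "smult c (\<Sum>i\<in>A. f i) = (\<Sum>i\<in>A. smult c (f i))"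
  by (induction A rule: infinite_finite_induct) (simp_all add: smult_add_right)

lemma const_pow: "[:x:] ^ k = smult (x ^ k) 1"
  by (induction k) (simp_all add: mult.commute)

theorem proposition4p2:
  fixes p d :: nat
    and F F' :: "'k::alg_closed_field poly"
    and a b c e :: 'k
    and lam :: int
    and h :: "'k poly fract"
  assumes char: "CHAR('k) = p"
    and alg: "\<forall>x::'k. algebraic_over_prime_field x"
    and p_prime: "prime p" and p_odd: "odd p"
    and d3: "d \<ge> 3" and pd: "\<not> p dvd d" and d1: "d mod p \<noteq> 1"
    and F_deg: "F = 0 \<or> degree F \<le> d - 2"
    and F'_deg: "F' = 0 \<or> degree F' \<le> d - 2"
    and F_exp: "\<forall>i. coeff F i \<noteq> 0 \<longrightarrow> \<not> p dvd i"
    and F'_exp: "\<forall>i. coeff F' i \<noteq> 0 \<longrightarrow> \<not> p dvd i"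
    and tr: "transforms p a b c e lam h (monom 1 d + F) (monom 1 d + F')"
  shows "c = 0 \<and> e \<noteq> 0 \<and> b / e = 0 \<and> of_int lam = (a / e) ^ d
         \<and> (a / e) ^ (d * (p - 1)) = 1
         \<and> (\<exists>k::int. h = rat_of_poly [:of_int k:])"
proof -
  define f where "f = monom 1 d + F"
  define f' where "f' = monom 1 d + F'"
  define lam' :: 'k where "lam' = of_int lam"
  have p2: "p \<ge> 2" using p_prime prime_ge_2_nat by blast
  have p3: "p \<ge> 3" using p2 p_odd by (cases "p = 2") auto
  have Fc: "coeff F i = 0" if "i \<ge> d - 1" for i
    using F_deg that d3 by (auto intro: coeff_eq_0)
  have F'c: "coeff F' i = 0" if "i \<ge> d - 1" for i
    using F'_deg that d3 by (auto intro: coeff_eq_0)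
  have fc: "coeff f i = (if i = d then 1 else coeff F i)" for i
    by (simp add: f_def coeff_monom Fc)
  have f'c: "coeff f' i = (if i = d then 1 else coeff F' i)" for i
    by (simp add: f'_def coeff_monom F'c)
  have degf: "degree f = d"
  proof (rule antisym)
    show "degree f \<le> d" unfolding f_def using F_deg d3
      by (intro degree_add_le) (auto simp: degree_monom_eq)
    show "d \<le> degree f" using fc[of d] by (intro le_degree) simp
  qed
  have degf': "degree f' \<le> d" unfolding f'_def using F'_deg d3
      by (intro degree_add_le) (auto simp: degree_monom_eq)
  have fdp: "coeff f i = 0" if "p dvd i" for i
    using fc[of i] F_exp that pd by auto
  have f'dp: "coeff f' i = 0" if "p dvd i" for i
    using f'c[of i] F'_exp that pd by auto
  from tr have det: "a * e - b * c \<noteq> 0" and lamp: "\<not> int p dvd lam"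
    and eq0: "mobius_subst_poly a b c e f = of_int lam * rat_of_poly f' + h ^ p - h"
    by (auto simp: transforms_def f_def f'_def)
  define Q where "Q = (\<lambda>n. \<exists>N D. D \<noteq> 0 \<and> h = Fract N D \<and> degree D = n)"
  have "\<exists>n. Q n" unfolding Q_def by (cases h rule: Fract_cases) auto
  then obtain n where Qn: "Q n" and Qmin: "\<forall>m<n. \<not> Q m"
    using exists_least_iff[of Q] by blast
  then obtain N D where D0: "D \<noteq> 0" and hND: "h = Fract N D" and degD: "degree D = n"
    unfolding Q_def by blast
  have noroot: "\<not> (poly N x0 = 0 \<and> poly D x0 = 0)" for x0
  proof
    assume A: "poly N x0 = 0 \<and> poly D x0 = 0"
    then obtain N1 D1 where N1: "N = [:-x0,1:] * N1" and D1: "D = [:-x0,1:] * D1"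
      by (meson dvdE poly_eq_0_iff_dvd)
    have D10: "D1 \<noteq> 0" using D0 D1 by auto
    have "h = Fract N1 D1" unfolding hND N1 D1 by (rule mult_fract_cancel) simp
    moreover have "degree D1 < n"
    proof -
      have "degree D = degree [:-x0,1:] + degree D1" unfolding D1 using D10
        by (intro degree_mult_eq) auto
      then show ?thesis using degD by simp
    qed
    ultimately show False using Qmin D10 unfolding Q_def by blast
  qed
  define L where "L = [:e, c:]"
  have L0: "L \<noteq> 0" using det by (auto simp: L_def)
  define S where "S = (\<Sum>i\<le>d. smult (coeff f i) ([:b, a:] ^ i * L ^ (d - i)))"
  define T where "T = smult lam' f' * D ^ p + N ^ p - N * D ^ (p - 1)"
  have key: "S * D ^ p = T * L ^ d"
  proof -
    have "Fract S (L ^ d) = Fract T (D ^ p)"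
    proof -
      have "Fract S (L ^ d) = mobius_subst_poly a b c e f"
        by (simp add: mobius_subst_poly_def degf S_def L_def)
      also have "\<dots> = Fract T (D ^ p)"
      proof -
        have Dp: "D ^ p = D ^ (p - 1) * D" using p2
          by (metis One_nat_def Suc_diff_le le_trans one_le_numeral power_Suc2 diff_Suc_1)
        have "of_int lam * rat_of_poly f' + h ^ p - h
           = Fract (of_int lam * f' * D ^ p * D + N ^ p * D - N * D ^ p) (D ^ p * D)"
          unfolding hND Fract_pow of_int_fract rat_of_poly_def using D0
          by (simp add: algebra_simps)
        also have "\<dots> = Fract T (D ^ p)" using D0
          by (simp add: eq_fract T_def algebra_simps of_int_poly lam'_def Dp)
        finally show ?thesis using eq0 by simp
      qed
      finally show ?thesis .
    qed
    then show ?thesis using D0 L0 by (simp add: eq_fract)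
  qed
  have c0: "c = 0"
  proof (rule ccontr)
    assume cn: "c \<noteq> 0"
    define x0 where "x0 = - e / c"
    have Lx0: "poly L x0 = 0" using cn by (simp add: L_def x0_def)
    have bx0: "poly [:b, a:] x0 \<noteq> 0"
    proof
      assume "poly [:b, a:] x0 = 0"
      then have "b + a * (- e / c) = 0" by (simp add: x0_def)
      then have "b * c - a * e = 0" using cn by (simp add: field_simps)
      then show False using det by (simp add: algebra_simps)
    qed
    have "poly S x0 = (\<Sum>i\<le>d. (if i = d then poly [:b, a:] x0 ^ d else 0))"
      unfolding S_def poly_sum
    proof (rule sum.cong)
      fix i assume "i \<in> {..d}"
      then show "poly (smult (coeff f i) ([:b, a:] ^ i * L ^ (d - i))) x0 =
            (if i = d then poly [:b, a:] x0 ^ d else 0)"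
        using Lx0 fc[of d] by (auto simp: poly_power zero_power)
    qed simp
    also have "\<dots> = poly [:b, a:] x0 ^ d" by simp
    finally have Sx0: "poly S x0 \<noteq> 0" using bx0 by simp
    hence S0: "S \<noteq> 0" by auto
    have T0: "T \<noteq> 0" using key S0 D0 by auto
    have oL: "order x0 L = 1"
    proof -
      have "L = smult c [:-x0, 1:]" using cn by (simp add: L_def x0_def)
      then have "order x0 L = order x0 [:-x0, 1:]" using cn order_smult[OF cn, of x0 "[:-x0, 1:]"]
        by (simp del: smult_pCons)
      also have "\<dots> = 1" using order_power_n_n[of x0 1] by simp
      finally show ?thesis .
    qed
    have "order x0 (S * D ^ p) = p * order x0 D"
      using S0 D0 by (simp add: order_mult order_pow order_0I[OF Sx0])
    moreover have "order x0 (T * L ^ d) = order x0 T + d"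
      using T0 L0 by (simp add: order_mult order_pow oL)
    ultimately have ord: "p * order x0 D = order x0 T + d" using key by simp
    show False
    proof (cases "order x0 D = 0")
      case True then show False using ord d3 by simp
    next
      case False
      then have Dx0: "poly D x0 = 0" using order_root by blast
      have "poly T x0 = poly N x0 ^ p" using Dx0 p2 by (simp add: T_def poly_power zero_power)
      then have "poly T x0 \<noteq> 0" using noroot[of x0] Dx0 by simp
      then have "order x0 T = 0" by (rule order_0I)
      then have "p dvd d" using ord by (metis add_0 dvd_triv_left)
      then show False using pd by simp
    qed
  qed
  have e0: "e \<noteq> 0" and a0: "a \<noteq> 0" using det c0 by auto
  define \<alpha> where "\<alpha> = a / e"
  define \<beta> where "\<beta> = b / e"
  have al0: "\<alpha> \<noteq> 0" using a0 e0 by (simp add: \<alpha>_def)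
  define q where "q = [:\<beta>, \<alpha>:]"
  have qc: "coeff (q ^ i) j = 0" if "i < j" for i j
  proof (rule coeff_eq_0)
    have "degree (q ^ i) \<le> degree q * i" by (rule degree_power_le)
    also have "\<dots> \<le> i" by (simp add: q_def degree_pCons_le)
    finally show "degree (q ^ i) < j" using that by simp
  qed
  define g where "g = (\<Sum>i\<le>d. smult (coeff f i) (q ^ i))"
  have Sg: "S = smult (e ^ d) g"
    unfolding S_def g_def smult_sum_right
  proof (rule sum.cong)
    fix i assume i: "i \<in> {..d}"
    have ba: "[:b, a:] = smult e q" using e0 by (simp add: q_def \<alpha>_def \<beta>_def)
    have Lp: "L ^ (d - i) = smult (e ^ (d - i)) 1" using c0 by (simp add: L_def const_pow)
    have "e ^ i * e ^ (d - i) = e ^ d" using i by (simp flip: power_add)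
    then show "smult (coeff f i) ([:b, a:] ^ i * L ^ (d - i)) = smult (e ^ d) (smult (coeff f i) (q ^ i))"
      unfolding ba Lp smult_power by (simp add: mult.commute mult.left_commute)
  qed simp
  have Ld: "L ^ d = smult (e ^ d) 1" using c0 by (simp add: L_def const_pow)
  have gT: "g * D ^ p = T"
  proof -
    have "smult (e ^ d) (g * D ^ p) = smult (e ^ d) T" using key unfolding Sg Ld by simp
    then show ?thesis by (rule smult_cancel[rotated]) (use e0 in simp)
  qed
  have degD0: "degree D = 0"
  proof (rule ccontr)
    assume "degree D \<noteq> 0"
    then obtain x0 where Dx0: "poly D x0 = 0" using alg_closed_imp_poly_has_root by blast
    have "poly T x0 = poly N x0 ^ p" using Dx0 p2 by (simp add: T_def poly_power zero_power)
    moreover have "poly T x0 = 0" unfolding gT[symmetric] using Dx0 p2 by (simp add: poly_power zero_power)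
    ultimately have "poly N x0 = 0" by simp
    then show False using noroot Dx0 by blast
  qed
  define d0 where "d0 = coeff D 0"
  have Dd0: "D = [:d0:]" using degree_0_id[OF degD0] unfolding d0_def by (rule sym)
  have d00: "d0 \<noteq> 0" using D0 Dd0 by auto
  define H where "H = smult (inverse d0) N"
  have NH: "N = smult d0 H" using d00 by (simp add: H_def)
  define R where "R = g - smult lam' f'"
  have RH: "R = H ^ p - H"
  proof -
    have dp: "d0 * d0 ^ (p - 1) = d0 ^ p" using p2
      using power_Suc[of d0 "p - 1"] p2 by simp
    have "T = smult (d0 ^ p) (smult lam' f') + smult (d0 ^ p) (H ^ p) - smult (d0 ^ p) H"
      unfolding T_def NH Dd0 const_pow smult_power
      using dp by (simp add: mult.commute[of _ d0])
    also have "\<dots> = smult (d0 ^ p) (smult lam' f' + H ^ p - H)"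
      by (simp only: smult_add_right smult_diff_right)
    finally have "T = smult (d0 ^ p) (smult lam' f' + H ^ p - H)" .
    moreover have "g * D ^ p = smult (d0 ^ p) g" unfolding Dd0 const_pow by simp
    ultimately have "smult (d0 ^ p) g = smult (d0 ^ p) (smult lam' f' + H ^ p - H)" using gT
      by simp
    then have "g = smult lam' f' + H ^ p - H"
      by (rule smult_cancel[rotated]) (use d00 in simp)
    then show ?thesis unfolding R_def by simp
  qed
  have hH: "h = Fract H 1"
  proof -
    have "N * 1 = H * D" unfolding NH Dd0 by simp
    then show ?thesis unfolding hND using D0 by (simp only: eq_fract(1) one_neq_zero not_False_eq_True)
  qed
  define m where "m = degree H"
  have degg: "coeff g j = 0" if "j > d" for j
    unfolding g_def coeff_sum using that by (intro sum.neutral) (auto intro: qc)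
  have Rbig: "coeff R j = 0" if "j > d" for j
    using degg[OF that] coeff_eq_0[of f' j] degf' that by (simp add: R_def)
  have lead: "coeff R (p * m) \<noteq> 0" if "m \<ge> 1"
  proof -
    have H0: "H \<noteq> 0" using that by (auto simp: m_def)
    have "coeff (H ^ p) (p * m) = lead_coeff H ^ p"
      using degree_power_eq[OF H0, of p] lead_coeff_power[of H p] by (simp add: m_def mult.commute)
    moreover have "coeff H (p * m) = 0" using that p2 by (intro coeff_eq_0) (simp add: m_def)
    ultimately show ?thesis using H0 by (simp add: RH)
  qed
  have pm: "p * m < d - 1"
  proof (cases "m = 0")
    case True then show ?thesis using d3 by simp
  next
    case False
    then have "p * m \<le> d" using lead Rbig by (meson not_le_imp_less le_less_linear less_one not_less)
    moreover have "p * m \<noteq> d" using pd by auto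
    moreover have "p * m \<noteq> d - 1"
    proof
      assume "p * m = d - 1"
      then have "d = 1 + m * p" using d3 by (simp add: mult.commute)
      then have "d mod p = 1 mod p" by (simp only: mod_mult_self1)
      then have "d mod p = 1" using p2 by simp
      then show False using d1 by simp
    qed
    ultimately show ?thesis by simp
  qed
  have RHc: "coeff R (d - 1) = 0"
  proof -
    have "degree (H ^ p) \<le> degree H * p" by (rule degree_power_le)
    then have "coeff (H ^ p) (d - 1) = 0" using pm by (intro coeff_eq_0) (simp add: m_def mult.commute)
    moreover have "m \<le> p * m" using p2 by simp
    then have "degree H < d - 1" using pm unfolding m_def by linarith
    then have "coeff H (d - 1) = 0" by (intro coeff_eq_0)
    ultimately show ?thesis by (simp add: RH)
  qed
  have gd1: "coeff g (d - 1) = of_nat d * \<alpha> ^ (d - 1) * \<beta>"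
  proof -
    have "coeff g (d - 1) = (\<Sum>i\<le>d. (if i = d then of_nat d * \<alpha> ^ (d - 1) * \<beta> else 0))"
      unfolding g_def coeff_sum
    proof (rule sum.cong)
      fix i assume i: "i \<in> {..d}"
      show "coeff (smult (coeff f i) (q ^ i)) (d - 1) = (if i = d then of_nat d * \<alpha> ^ (d - 1) * \<beta> else 0)"
      proof (cases "i = d")
        case True
        have "coeff (q ^ Suc (d - 1)) (d - 1) = of_nat (Suc (d - 1)) * \<alpha> ^ (d - 1) * \<beta>"
          unfolding q_def by (rule conjunct2[OF coeff_lin_pow])
        then show ?thesis using True d3 fc[of d] by (simp add: Suc_diff_1)
      next
        case False
        show ?thesis
        proof (cases "i = d - 1")
          case True then show ?thesis using False fc[of i] Fc[of i] by simp
        next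
          case False2: False
          then have "i < d - 1" using i False by auto
          then show ?thesis using qc[of i "d - 1"] False by simp
        qed
      qed
    qed simp
    also have "\<dots> = of_nat d * \<alpha> ^ (d - 1) * \<beta>" by simp
    finally show ?thesis .
  qed
  have "coeff R (d - 1) = coeff g (d - 1)" using f'c[of "d - 1"] F'c[of "d - 1"] d3 by (simp add: R_def)
  then have "of_nat d * \<alpha> ^ (d - 1) * \<beta> = 0" using RHc gd1 by simp
  moreover have "(of_nat d :: 'k) \<noteq> 0" using pd char by (simp add: of_nat_eq_0_iff_char_dvd)
  ultimately have b0: "\<beta> = 0" using al0 by simp
  have qi: "q ^ i = monom (\<alpha> ^ i) i" for i
  proof -
    have "q = monom \<alpha> 1" unfolding q_def b0 by (simp add: monom_Suc monom_0)
    then show ?thesis using monom_power[of \<alpha> 1 i] by simp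
  qed
  have gc: "coeff g j = coeff f j * \<alpha> ^ j" for j
  proof (cases "j \<le> d")
    case True
    have "coeff g j = (\<Sum>i\<le>d. (if i = j then coeff f j * \<alpha> ^ j else 0))"
      unfolding g_def coeff_sum qi by (intro sum.cong) (auto simp: coeff_monom)
    then show ?thesis using True by simp
  next
    case False
    then show ?thesis using degg[of j] coeff_eq_0[of f j] degf by simp
  qed
  have Rc: "coeff R j = coeff f j * \<alpha> ^ j - lam' * coeff f' j" for j
    by (simp add: R_def gc)
  have Rp: "coeff R j = 0" if "p dvd j" for j
    using Rc[of j] fdp[OF that] f'dp[OF that] by simp
  have m0: "m = 0"
  proof (rule ccontr)
    assume "m \<noteq> 0"
    then have "coeff R (p * m) \<noteq> 0" using lead by simp
    then show False using Rp[of "p * m"] by simp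
  qed
  define h0 where "h0 = coeff H 0"
  have Hh0: "H = [:h0:]" using degree_0_id[of H] m0 unfolding h0_def m_def by simp
  have Rconst: "R = [:h0 ^ p - h0:]" unfolding RH Hh0 const_pow by simp
  have "h0 ^ p = h0" using Rp[of 0] Rconst by simp
  then obtain k :: int where k: "h0 = of_int k" using frob_fixed[of h0] char p_prime by auto
  have "coeff R d = \<alpha> ^ d - lam'" using Rc[of d] fc[of d] f'c[of d] by simp
  moreover have "coeff R d = 0" using Rconst d3 by (simp add: coeff_pCons split: nat.split)
  ultimately have lamd: "lam' = \<alpha> ^ d" by simp
  have lampow: "lam' ^ (p - 1) = 1"
  proof -
    define r where "r = nat (lam mod int p)"
    have "int r = lam mod int p" using p2 by (simp add: r_def)
    then have "[lam = int r] (mod int p)" by (simp add: cong_def)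
    then have lr: "lam' = of_nat r" using of_int_eq_iff_cong_CHAR[of lam "int r", where 'a='k] char
      by (simp add: lam'_def)
    have "\<not> p dvd r"
    proof
      assume "p dvd r"
      then have "int p dvd lam mod int p" using \<open>int r = lam mod int p\<close> by (metis int_dvd_int_iff)
      then show False using lamp by (simp add: dvd_mod_iff)
    qed
    then have r0: "(of_nat r :: 'k) \<noteq> 0" using char by (simp add: of_nat_eq_0_iff_char_dvd)
    have "(of_nat r :: 'k) ^ p = of_nat r" using of_nat_frob[of r, where 'k='k] char p_prime by simp
    moreover have "(of_nat r :: 'k) ^ p = of_nat r ^ (p - 1) * of_nat r" using p2
      by (metis Suc_diff_1 less_le_trans pos2 power_Suc2)
    ultimately have "of_nat r ^ (p - 1) * of_nat r = 1 * (of_nat r :: 'k)" by simp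
    then have "(of_nat r :: 'k) ^ (p - 1) = 1" using r0 by (metis mult_right_cancel)
    then show ?thesis using lr by simp
  qed
  show ?thesis
  proof (intro conjI)
    show "c = 0" by (rule c0)
    show "e \<noteq> 0" by (rule e0)
    show "b / e = 0" using b0 by (simp add: \<beta>_def)
    show "of_int lam = (a / e) ^ d" using lamd by (simp add: lam'_def \<alpha>_def)
    show "(a / e) ^ (d * (p - 1)) = 1" using lampow lamd by (simp add: \<alpha>_def power_mult)
    show "\<exists>k::int. h = rat_of_poly [:of_int k:]" using hH Hh0 k by (auto simp: rat_of_poly_def)
  qed
qed

end
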